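(* Let $\mathcal F\subseteq\mathcal G$ be lattice filters of an MV-algebra $\mathcal L$, and let $Q$ be an implication filter with $Q\subseteq\mathcal K(\mathcal G)$. Then $$(\mathcal F\sqsubseteq\!\!\to\mathcal G)/Q=(\mathcal F/Q)\sqsubseteq\!\!\to(\mathcal G/Q),$$ where the right-hand side is computed in the MV-algebra $\mathcal L/Q$.
   Context: $\mathcal L=(L,\oplus,\lnot,0)$ is an MV-algebra. We write $1=\lnot0$, $x\otimes y=\lnot(\lnot x\oplus\lnot y)$, and $x\to y=\lnot x\oplus y$, and use the usual lattice order. A lattice filter is a nonempty upward-closed subset closed under $\wedge$. An implication filter is a set $Q\ni1$ closed under modus ponens. $\mathcal L/Q$ is the quotient by $x\sim_Q y\iff x\to y,\ y\to x\in Q$, and $X/Q=\{[x]_Q : x\in X\}$. For an upward-closed $\mathcal F$ (in any MV-algebra) and $a$, let $\mathcal F_a=\{z: z\to a\notin\mathcal F\}$, and let $\mathcal K(\mathcal F)=\{z:\forall a\notin\mathcal F,\ z\to a\notin\mathcal F\}$. For $\mathcal F\subseteq\mathcal G$ we put $\mathcal F\sqsubseteq\!\!\to\mathcal G=\bigcap_{a\notin\mathcal G}\mathcal F_a$. *)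

theory Defs
  imports Main
begin

text \<open>MV-algebras, presented as structures on an explicit carrier set, so that
quotient algebras (whose elements are equivalence classes) can be formed.\<close>

record 'a mv =
  mv_carrier :: "'a set"
  mv_oplus :: "'a \<Rightarrow> 'a \<Rightarrow> 'a"
  mv_neg :: "'a \<Rightarrow> 'a"
  mv_zero :: "'a"

definition mv_one :: "('a, 'b) mv_scheme \<Rightarrow> 'a" where
  "mv_one L = mv_neg L (mv_zero L)"

definition mv_otimes :: "('a, 'b) mv_scheme \<Rightarrow> 'a \<Rightarrow> 'a \<Rightarrow> 'a" where
  "mv_otimes L x y = mv_neg L (mv_oplus L (mv_neg L x) (mv_neg L y))"

definition mv_imp :: "('a, 'b) mv_scheme \<Rightarrow> 'a \<Rightarrow> 'a \<Rightarrow> 'a" where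
  "mv_imp L x y = mv_oplus L (mv_neg L x) y"

definition mv_le :: "('a, 'b) mv_scheme \<Rightarrow> 'a \<Rightarrow> 'a \<Rightarrow> bool" where
  "mv_le L x y \<longleftrightarrow> mv_imp L x y = mv_one L"

definition mv_meet :: "('a, 'b) mv_scheme \<Rightarrow> 'a \<Rightarrow> 'a \<Rightarrow> 'a" where
  "mv_meet L x y = mv_otimes L x (mv_imp L x y)"

definition mv_algebra :: "('a, 'b) mv_scheme \<Rightarrow> bool" where
  "mv_algebra L \<longleftrightarrow>
     mv_zero L \<in> mv_carrier L \<and>
     (\<forall>x\<in>mv_carrier L. \<forall>y\<in>mv_carrier L. mv_oplus L x y \<in> mv_carrier L) \<and>
     (\<forall>x\<in>mv_carrier L. mv_neg L x \<in> mv_carrier L) \<and>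
     (\<forall>x\<in>mv_carrier L. \<forall>y\<in>mv_carrier L. \<forall>z\<in>mv_carrier L.
        mv_oplus L x (mv_oplus L y z) = mv_oplus L (mv_oplus L x y) z) \<and>
     (\<forall>x\<in>mv_carrier L. \<forall>y\<in>mv_carrier L. mv_oplus L x y = mv_oplus L y x) \<and>
     (\<forall>x\<in>mv_carrier L. mv_oplus L x (mv_zero L) = x) \<and>
     (\<forall>x\<in>mv_carrier L. mv_neg L (mv_neg L x) = x) \<and>
     (\<forall>x\<in>mv_carrier L. mv_oplus L x (mv_one L) = mv_one L) \<and>
     (\<forall>x\<in>mv_carrier L. \<forall>y\<in>mv_carrier L.
        mv_oplus L (mv_neg L (mv_oplus L (mv_neg L x) y)) y =
        mv_oplus L (mv_neg L (mv_oplus L (mv_neg L y) x)) x)"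

definition lattice_filter :: "('a, 'b) mv_scheme \<Rightarrow> 'a set \<Rightarrow> bool" where
  "lattice_filter L F \<longleftrightarrow> F \<subseteq> mv_carrier L \<and> F \<noteq> {} \<and>
     (\<forall>x\<in>F. \<forall>y\<in>mv_carrier L. mv_le L x y \<longrightarrow> y \<in> F) \<and>
     (\<forall>x\<in>F. \<forall>y\<in>F. mv_meet L x y \<in> F)"

definition implication_filter :: "('a, 'b) mv_scheme \<Rightarrow> 'a set \<Rightarrow> bool" where
  "implication_filter L Q \<longleftrightarrow> Q \<subseteq> mv_carrier L \<and> mv_one L \<in> Q \<and>
     (\<forall>x\<in>mv_carrier L. \<forall>y\<in>mv_carrier L. x \<in> Q \<longrightarrow> mv_imp L x y \<in> Q \<longrightarrow> y \<in> Q)"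

definition mv_class :: "('a, 'b) mv_scheme \<Rightarrow> 'a set \<Rightarrow> 'a \<Rightarrow> 'a set" where
  "mv_class L Q x = {y \<in> mv_carrier L. mv_imp L x y \<in> Q \<and> mv_imp L y x \<in> Q}"

definition mv_quot_set :: "('a, 'b) mv_scheme \<Rightarrow> 'a set \<Rightarrow> 'a set \<Rightarrow> 'a set set" where
  "mv_quot_set L Q X = mv_class L Q ` X"

definition mv_quot :: "('a, 'b) mv_scheme \<Rightarrow> 'a set \<Rightarrow> 'a set mv" where
  "mv_quot L Q =
     \<lparr> mv_carrier = mv_quot_set L Q (mv_carrier L),
       mv_oplus = (\<lambda>X Y. mv_class L Q (mv_oplus L (SOME x. x \<in> X) (SOME y. y \<in> Y))),
       mv_neg = (\<lambda>X. mv_class L Q (mv_neg L (SOME x. x \<in> X))),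
       mv_zero = mv_class L Q (mv_zero L) \<rparr>"

definition F_sub :: "('a, 'b) mv_scheme \<Rightarrow> 'a set \<Rightarrow> 'a \<Rightarrow> 'a set" where
  "F_sub L F a = {z \<in> mv_carrier L. mv_imp L z a \<notin> F}"

definition K_set :: "('a, 'b) mv_scheme \<Rightarrow> 'a set \<Rightarrow> 'a set" where
  "K_set L F = {z \<in> mv_carrier L. \<forall>a\<in>mv_carrier L. a \<notin> F \<longrightarrow> mv_imp L z a \<notin> F}"

text \<open>Intersection over a ranging over carrier minus G (relative to the carrier,
  so that the empty intersection is the whole carrier).\<close>
definition rel_imp :: "('a, 'b) mv_scheme \<Rightarrow> 'a set \<Rightarrow> 'a set \<Rightarrow> 'a set" where
  "rel_imp L F G = mv_carrier L \<inter> (\<Inter>a\<in>mv_carrier L - G. F_sub L F a)"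

end

theory Submission
  imports Defs
begin

locale mvl =
  fixes L :: "('a, 'b) mv_scheme"
  assumes mva: "mv_algebra L"
begin

abbreviation "C \<equiv> mv_carrier L"
abbreviation "p \<equiv> mv_oplus L"
abbreviation "n \<equiv> mv_neg L"

lemma cl[simp]: "x \<in> C \<Longrightarrow> y \<in> C \<Longrightarrow> p x y \<in> C" "x \<in> C \<Longrightarrow> n x \<in> C"
  "mv_zero L \<in> C" using mva unfolding mv_algebra_def by auto

lemma one_cl[simp]: "mv_one L \<in> C" unfolding mv_one_def by simp

lemma assoc: "x \<in> C \<Longrightarrow> y \<in> C \<Longrightarrow> z \<in> C \<Longrightarrow> p (p x y) z = p x (p y z)"
  using mva unfolding mv_algebra_def by metis
lemma comm: "x \<in> C \<Longrightarrow> y \<in> C \<Longrightarrow> p x y = p y x"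
  using mva unfolding mv_algebra_def by metis
lemma lcomm: "x \<in> C \<Longrightarrow> y \<in> C \<Longrightarrow> z \<in> C \<Longrightarrow> p x (p y z) = p y (p x z)"
  by (metis assoc comm)
lemma zr[simp]: "x \<in> C \<Longrightarrow> p x (mv_zero L) = x"
  using mva unfolding mv_algebra_def by metis
lemma nn[simp]: "x \<in> C \<Longrightarrow> n (n x) = x"
  using mva unfolding mv_algebra_def by metis
lemma onr[simp]: "x \<in> C \<Longrightarrow> p x (mv_one L) = mv_one L"
  using mva unfolding mv_algebra_def by metis
lemma onl[simp]: "x \<in> C \<Longrightarrow> p (mv_one L) x = mv_one L"
  using comm onr one_cl by metis
lemma ax: "x \<in> C \<Longrightarrow> y \<in> C \<Longrightarrow> p (n (p (n x) y)) y = p (n (p (n y) x)) x"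
  using mva unfolding mv_algebra_def by metis

lemma compl: "x \<in> C \<Longrightarrow> p (n x) x = mv_one L"
proof -
  assume x: "x \<in> C"
  have "p (n (p (n x) (mv_one L))) (mv_one L) = p (n (p (n (mv_one L)) x)) x"
    using ax[OF x one_cl] .
  moreover have "n (mv_one L) = mv_zero L" unfolding mv_one_def by simp
  ultimately show ?thesis using x by (simp add: comm[of "mv_zero L"])
qed

lemma compl2: "x \<in> C \<Longrightarrow> p x (n x) = mv_one L"
  using compl comm by (metis cl(2))

lemma compl3: "x \<in> C \<Longrightarrow> y \<in> C \<Longrightarrow> p x (p (n x) y) = mv_one L"
  by (metis assoc cl(2) compl2 onl)

lemma imp_cl[simp]: "x \<in> C \<Longrightarrow> y \<in> C \<Longrightarrow> mv_imp L x y \<in> C"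
  unfolding mv_imp_def by simp

lemma imp_self: "x \<in> C \<Longrightarrow> mv_imp L x x = mv_one L"
  unfolding mv_imp_def by (simp add: compl)

lemma le_join: "f \<in> C \<Longrightarrow> w \<in> C \<Longrightarrow> mv_imp L f (mv_imp L (mv_imp L f w) w) = mv_one L"
proof -
  assume f: "f \<in> C" and w: "w \<in> C"
  have "mv_imp L (mv_imp L f w) w = p (n (p (n w) f)) f"
    unfolding mv_imp_def using ax[of f w] f w by simp
  then have "mv_imp L f (mv_imp L (mv_imp L f w) w) = p (n f) (p (n (p (n w) f)) f)"
    unfolding mv_imp_def by simp
  also have "\<dots> = p (n (p (n w) f)) (p (n f) f)" using f w lcomm by simp
  also have "\<dots> = mv_one L" using f w by (simp add: compl)
  finally show ?thesis .
qed

lemma exch: "x \<in> C \<Longrightarrow> y \<in> C \<Longrightarrow> z \<in> C \<Longrightarrow> mv_imp L x (mv_imp L y z) = mv_imp L y (mv_imp L x z)"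
  unfolding mv_imp_def by (simp add: lcomm)

lemma trans1: "x \<in> C \<Longrightarrow> y \<in> C \<Longrightarrow> w \<in> C \<Longrightarrow>
   mv_imp L (mv_imp L x y) (mv_imp L (mv_imp L y w) (mv_imp L x w)) = mv_one L"
proof -
  assume x: "x \<in> C" and y: "y \<in> C" and w: "w \<in> C"
  have "mv_imp L (mv_imp L x y) (mv_imp L (mv_imp L y w) (mv_imp L x w))
     = p (n (p (n x) y)) (p (n x) (p (n (p (n y) w)) w))"
    unfolding mv_imp_def using x y w by (simp add: lcomm[of "n (p (n y) w)" "n x"])
  also have "\<dots> = p (n (p (n x) y)) (p (n x) (p (n (p (n w) y)) y))"
    using ax[OF y w] by simp
  also have "\<dots> = p (n (p (n w) y)) (p (n (p (n x) y)) (p (n x) y))"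
    using x y w by (simp add: lcomm assoc)
  also have "\<dots> = mv_one L" using x y w by (simp add: compl)
  finally show ?thesis .
qed

lemma mono1: "x \<in> C \<Longrightarrow> x' \<in> C \<Longrightarrow> y \<in> C \<Longrightarrow>
   mv_imp L (mv_imp L x x') (mv_imp L (p x y) (p x' y)) = mv_one L"
proof -
  assume x: "x \<in> C" and x': "x' \<in> C" and y: "y \<in> C"
  have "mv_imp L (mv_imp L x x') (mv_imp L (p x y) (p x' y))
     = p (n (p x y)) (p y (p (n (p (n x) x')) x'))"
    unfolding mv_imp_def using x x' y
    lcomm[of "n (p (n x) x')" "n (p x y)" "p x' y"] comm[of x' y]
    lcomm[of "n (p (n x) x')" y x'] by simp
  also have "\<dots> = p (n (p x y)) (p y (p (n (p (n x') x)) x))"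
    using ax[OF x x'] by simp
  also have "\<dots> = p (n (p (n x') x)) (p (n (p x y)) (p x y))"
    using x x' y lcomm[of y "n (p (n x') x)" x] comm[of y x]
     lcomm[of "n (p x y)" "n (p (n x') x)" "p x y"] by simp
  also have "\<dots> = mv_one L" using x x' y by (simp add: compl)
  finally show ?thesis .
qed

end


locale mvq = mvl +
  fixes Q :: "'a set"
  assumes Qf: "implication_filter L Q"
begin

lemma QC: "Q \<subseteq> C"
  using Qf unfolding implication_filter_def by (elim conjE)
lemma Q1: "mv_one L \<in> Q"
  using Qf unfolding implication_filter_def by (elim conjE)
lemma Qmp: "x \<in> C \<Longrightarrow> y \<in> C \<Longrightarrow> x \<in> Q \<Longrightarrow> mv_imp L x y \<in> Q \<Longrightarrow> y \<in> Q"
  using Qf unfolding implication_filter_def by (elim conjE) (drule bspec, assumption, drule bspec, assumption, simp)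

lemma up: "q \<in> Q \<Longrightarrow> r \<in> C \<Longrightarrow> mv_imp L q r = mv_one L \<Longrightarrow> r \<in> Q"
proof -
  assume a: "q \<in> Q" "r \<in> C" "mv_imp L q r = mv_one L"
  have "q \<in> C" using a(1) QC by blast
  then show ?thesis using Qmp[of q r] a Q1 by simp
qed

lemma qtrans: "x \<in> C \<Longrightarrow> y \<in> C \<Longrightarrow> w \<in> C \<Longrightarrow> mv_imp L x y \<in> Q \<Longrightarrow> mv_imp L y w \<in> Q
  \<Longrightarrow> mv_imp L x w \<in> Q"
proof -
  assume a: "x \<in> C" "y \<in> C" "w \<in> C" "mv_imp L x y \<in> Q" "mv_imp L y w \<in> Q"
  have "mv_imp L (mv_imp L y w) (mv_imp L x w) \<in> Q"
    using up[OF a(4) _ trans1[OF a(1-3)]] a by simp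
  then show ?thesis using Qmp[of "mv_imp L y w" "mv_imp L x w"] a by simp
qed

abbreviation "cls \<equiv> mv_class L Q"

lemma cls_self: "x \<in> C \<Longrightarrow> x \<in> cls x"
  unfolding mv_class_def using imp_self Q1 by auto

lemma cls_eq: "x \<in> C \<Longrightarrow> y \<in> C \<Longrightarrow> mv_imp L x y \<in> Q \<Longrightarrow> mv_imp L y x \<in> Q \<Longrightarrow> cls x = cls y"
proof -
  assume a: "x \<in> C" "y \<in> C" "mv_imp L x y \<in> Q" "mv_imp L y x \<in> Q"
  have "z \<in> cls x \<longleftrightarrow> z \<in> cls y" for z
  proof
    assume "z \<in> cls x"
    then have z: "z \<in> C" "mv_imp L x z \<in> Q" "mv_imp L z x \<in> Q" unfolding mv_class_def by auto
    have "mv_imp L y z \<in> Q" using qtrans[of y x z] a z by simp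
    moreover have "mv_imp L z y \<in> Q" using qtrans[of z x y] a z by simp
    ultimately show "z \<in> cls y" using z unfolding mv_class_def by simp
  next
    assume "z \<in> cls y"
    then have z: "z \<in> C" "mv_imp L y z \<in> Q" "mv_imp L z y \<in> Q" unfolding mv_class_def by auto
    have "mv_imp L x z \<in> Q" using qtrans[of x y z] a z by simp
    moreover have "mv_imp L z x \<in> Q" using qtrans[of z y x] a z by simp
    ultimately show "z \<in> cls x" using z unfolding mv_class_def by simp
  qed
  then show ?thesis by blast
qed

lemma cls_mem: "y \<in> cls x \<Longrightarrow> x \<in> C \<Longrightarrow> cls y = cls x"
proof -
  assume a: "y \<in> cls x" "x \<in> C"
  then have "y \<in> C" "mv_imp L x y \<in> Q" "mv_imp L y x \<in> Q" unfolding mv_class_def by auto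
  then show ?thesis using cls_eq[of y x] a by simp
qed

lemma neg_cong: "x \<in> C \<Longrightarrow> y \<in> C \<Longrightarrow> mv_imp L x y \<in> Q \<Longrightarrow> mv_imp L (n y) (n x) \<in> Q"
  unfolding mv_imp_def using comm[of "n x" y] by simp

lemma plus_cong: "x \<in> C \<Longrightarrow> x' \<in> C \<Longrightarrow> y \<in> C \<Longrightarrow> mv_imp L x x' \<in> Q \<Longrightarrow>
   mv_imp L (p x y) (p x' y) \<in> Q"
  using up[of "mv_imp L x x'" "mv_imp L (p x y) (p x' y)"] mono1[of x x' y] by simp

lemma cls_neg: "x \<in> C \<Longrightarrow> y \<in> cls x \<Longrightarrow> cls (n y) = cls (n x)"
  apply (rule cls_eq)
  unfolding mv_class_def using neg_cong by auto

lemma cls_plus: "x \<in> C \<Longrightarrow> y \<in> C \<Longrightarrow> x' \<in> cls x \<Longrightarrow> y' \<in> cls y \<Longrightarrow> cls (p x' y') = cls (p x y)"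
proof -
  assume a: "x \<in> C" "y \<in> C" "x' \<in> cls x" "y' \<in> cls y"
  then have b: "x' \<in> C" "y' \<in> C" "mv_imp L x x' \<in> Q" "mv_imp L x' x \<in> Q"
    "mv_imp L y y' \<in> Q" "mv_imp L y' y \<in> Q" unfolding mv_class_def by auto
  have "cls (p x' y') = cls (p x y')"
    using b plus_cong[of x' x y'] plus_cong[of x x' y'] a by (intro cls_eq) auto
  also have "\<dots> = cls (p y' x)" using comm a b by simp
  also have "\<dots> = cls (p y x)"
    using b plus_cong[of y' y x] plus_cong[of y y' x] a by (intro cls_eq) auto
  also have "\<dots> = cls (p x y)" using comm a b by simp
  finally show ?thesis .
qed

lemma cls_ne: "x \<in> C \<Longrightarrow> (SOME z. z \<in> cls x) \<in> cls x"
  using cls_self by (meson someI)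

lemma cls_sub: "cls x \<subseteq> C" unfolding mv_class_def by auto

lemma qimp: "z \<in> C \<Longrightarrow> a \<in> C \<Longrightarrow> mv_imp (mv_quot L Q) (cls z) (cls a) = cls (mv_imp L z a)"
proof -
  assume z: "z \<in> C" and a: "a \<in> C"
  define z0 where "z0 = (SOME x. x \<in> cls z)"
  have z0: "z0 \<in> cls z" using cls_ne z z0_def by simp
  then have z0C: "z0 \<in> C" using cls_sub by auto
  define u0 where "u0 = (SOME x. x \<in> cls (n z0))"
  have u0: "u0 \<in> cls (n z0)" using cls_ne z0C u0_def by simp
  have u0': "u0 \<in> cls (n z)" using u0 cls_neg[OF z z0] by simp
  define a0 where "a0 = (SOME x. x \<in> cls a)"
  have a0: "a0 \<in> cls a" using cls_ne a a0_def by simp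
  have "mv_imp (mv_quot L Q) (cls z) (cls a) = cls (p u0 a0)"
    unfolding mv_imp_def mv_quot_def by (simp add: u0_def z0_def a0_def)
  also have "\<dots> = cls (p (n z) a)" using cls_plus u0' a0 z a by simp
  finally show ?thesis unfolding mv_imp_def .
qed

end

theorem mainTheorem10:
  fixes L :: "'a mv" and F G Q :: "'a set"
  assumes "mv_algebra L"
    and "lattice_filter L F" and "lattice_filter L G" and "F \<subseteq> G"
    and "implication_filter L Q" and "Q \<subseteq> K_set L G"
  shows "mv_quot_set L Q (rel_imp L F G) =
         rel_imp (mv_quot L Q) (mv_quot_set L Q F) (mv_quot_set L Q G)"
proof -
  interpret mvq L Q using assms by (simp add: mvl_def mvq_def mvq_axioms_def)
  have FC: "F \<subseteq> C" and Fup: "\<And>x y. x \<in> F \<Longrightarrow> y \<in> C \<Longrightarrow> mv_le L x y \<Longrightarrow> y \<in> F"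
    using assms(2) unfolding lattice_filter_def by auto
  have GC: "G \<subseteq> C" and Gup: "\<And>x y. x \<in> G \<Longrightarrow> y \<in> C \<Longrightarrow> mv_le L x y \<Longrightarrow> y \<in> G"
    using assms(3) unfolding lattice_filter_def by auto
  have K: "\<And>q a. q \<in> Q \<Longrightarrow> a \<in> C \<Longrightarrow> a \<notin> G \<Longrightarrow> mv_imp L q a \<notin> G"
    using assms(6) unfolding K_set_def by auto
  have sat: "a \<in> G" if "g \<in> G" "a \<in> C" "mv_imp L g a \<in> Q" for g a
  proof (rule ccontr)
    assume "a \<notin> G"
    then have "mv_imp L (mv_imp L g a) a \<notin> G" using K that by blast
    moreover have "mv_le L g (mv_imp L (mv_imp L g a) a)"
      unfolding mv_le_def using le_join that GC by auto
    ultimately show False using Gup that GC by auto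
  qed
  have carr: "mv_carrier (mv_quot L Q) = cls ` C"
    unfolding mv_quot_def mv_quot_set_def by simp
  show ?thesis
  proof (rule equalityI; rule subsetI)
    fix X assume "X \<in> mv_quot_set L Q (rel_imp L F G)"
    then obtain z where z: "z \<in> C" "X = cls z" and P: "\<And>a. a \<in> C \<Longrightarrow> a \<notin> G \<Longrightarrow> mv_imp L z a \<notin> F"
      unfolding mv_quot_set_def rel_imp_def F_sub_def by auto
    have "mv_imp (mv_quot L Q) X A \<notin> mv_quot_set L Q F"
      if A: "A \<in> mv_carrier (mv_quot L Q)" "A \<notin> mv_quot_set L Q G" for A
    proof
      obtain a where a: "a \<in> C" "A = cls a" using A carr by auto
      have aG: "a \<notin> G" using A a unfolding mv_quot_set_def by auto
      assume "mv_imp (mv_quot L Q) X A \<in> mv_quot_set L Q F"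
      then obtain f where f: "f \<in> F" "cls (mv_imp L z a) = cls f"
        using qimp z a unfolding mv_quot_set_def by auto
      have fC: "f \<in> C" using f FC by auto
      define w where "w = mv_imp L z a"
      have wC: "w \<in> C" using z a w_def by simp
      have "f \<in> cls w" using f cls_self fC w_def by metis
      then have q: "mv_imp L f w \<in> Q" unfolding mv_class_def by auto
      define q where "q = mv_imp L f w"
      have qC: "q \<in> C" using q_def fC wC by simp
      have "mv_imp L q a \<notin> G" using K q a aG q_def by blast
      then have nf: "mv_imp L z (mv_imp L q a) \<notin> F" using P a qC by simp
      have "mv_imp L z (mv_imp L q a) = mv_imp L q w" using exch z qC a w_def by simp
      moreover have "mv_le L f (mv_imp L q w)" unfolding mv_le_def q_def
        using le_join fC wC by simp
      ultimately have "mv_imp L z (mv_imp L q a) \<in> F" using Fup f qC wC by simp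
      then show False using nf by simp
    qed
    moreover have "X \<in> mv_carrier (mv_quot L Q)" using carr z by simp
    ultimately show "X \<in> rel_imp (mv_quot L Q) (mv_quot_set L Q F) (mv_quot_set L Q G)"
      unfolding rel_imp_def F_sub_def by auto
  next
    fix X assume X: "X \<in> rel_imp (mv_quot L Q) (mv_quot_set L Q F) (mv_quot_set L Q G)"
    then obtain z where z: "z \<in> C" "X = cls z" unfolding rel_imp_def carr by auto
    have "mv_imp L z a \<notin> F" if a: "a \<in> C" "a \<notin> G" for a
    proof
      assume za: "mv_imp L z a \<in> F"
      have "cls a \<notin> mv_quot_set L Q G"
      proof
        assume "cls a \<in> mv_quot_set L Q G"
        then obtain g where g: "g \<in> G" "cls a = cls g" unfolding mv_quot_set_def by auto
        have "a \<in> cls g" using g cls_self a by metis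
        then have "mv_imp L g a \<in> Q" unfolding mv_class_def by auto
        then show False using sat g a by blast
      qed
      moreover have "cls a \<in> mv_carrier (mv_quot L Q)" using carr a by simp
      ultimately have "mv_imp (mv_quot L Q) X (cls a) \<notin> mv_quot_set L Q F"
        using X unfolding rel_imp_def F_sub_def by blast
      then show False using qimp z a za unfolding mv_quot_set_def by auto
    qed
    then have "z \<in> rel_imp L F G" unfolding rel_imp_def F_sub_def using z by auto
    then show "X \<in> mv_quot_set L Q (rel_imp L F G)" unfolding mv_quot_set_def using z by auto
  qed
qed

end
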